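(* Let $n$ be a positive integer, $\mathcal{X}=\{\frac1n,\frac2n,\ldots,\frac nn\}$, and let $\mathcal{H}_{TH;n}=\{h_b : b\in\{\frac{1}{2n},\frac{3}{2n},\ldots,\frac{2n+1}{2n}\}\}$ where $h_b:\mathcal{X}\to\{0,1\}$ is given by $h_b(x)=1$ iff $x\le b$. Then for every $0<\alpha<1/3$, the class $\mathcal{H}_{TH;n}$ is $(\alpha,\alpha)$-separable.
   Context: For a class $\mathcal{H}$ over finite domain $\mathcal{X}$, its hypotheses graph is bipartite with parts $\mathcal{H}$ and $\mathcal{X}$, $h$ adjacent to $x$ iff $h(x)=1$. For $S\subseteq\mathcal{X}$, $T\subseteq\mathcal{H}$, $d(S,T)=\frac{e(S,T)}{|S||T|}$ where $e(S,T)$ is the number of edges between $S$ and $T$. Two hypotheses $h_1,h_2$ are $\epsilon$-close if $|\{x: h_1(x)\ne h_2(x)\}|\le\epsilon|\mathcal{X}|$; $B_h(\epsilon)$ is the set of hypotheses $\epsilon$-close to $h$. $T\subseteq\mathcal{H}$ is $(\alpha,\epsilon)$-tight if there is $h$ with $|T\cap B_h(\epsilon)|\ge\alpha|T|$. $\mathcal{H}$ is $(\alpha,\epsilon)$-separable if for every $T\subseteq\mathcal{H}$ that is not $(\alpha,\epsilon)$-tight there exist $S\subseteq\mathcal{X}$ and disjoint $T_0,T_1\subseteq T$ with $|S|\ge\alpha|\mathcal{X}|$, $|T_0|\ge\alpha|T|$, $|T_1|\ge\alpha|T|$ and $|d(S,T_0)-d(S,T_1)|\ge\alpha$. *)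

theory Defs
  imports Complex_Main
begin

text \<open>A hypothesis class over a finite domain X is a set H of functions
  'x \<Rightarrow> bool; h(x)=1 is rendered as h x = True.  The hypotheses graph has an
  edge between h and x iff h x.\<close>

definition edges :: "'x set \<Rightarrow> ('x \<Rightarrow> bool) set \<Rightarrow> nat" where
  "edges S T = card {(x, h). x \<in> S \<and> h \<in> T \<and> h x}"

definition density :: "'x set \<Rightarrow> ('x \<Rightarrow> bool) set \<Rightarrow> real" where
  "density S T = real (edges S T) / (real (card S) * real (card T))"

definition eps_close :: "'x set \<Rightarrow> real \<Rightarrow> ('x \<Rightarrow> bool) \<Rightarrow> ('x \<Rightarrow> bool) \<Rightarrow> bool" where
  "eps_close X \<epsilon> h1 h2 \<longleftrightarrow> real (card {x \<in> X. h1 x \<noteq> h2 x}) \<le> \<epsilon> * real (card X)"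

definition ball_hyp :: "'x set \<Rightarrow> ('x \<Rightarrow> bool) set \<Rightarrow> ('x \<Rightarrow> bool) \<Rightarrow> real \<Rightarrow> ('x \<Rightarrow> bool) set" where
  "ball_hyp X H h \<epsilon> = {h' \<in> H. eps_close X \<epsilon> h h'}"

definition tight :: "'x set \<Rightarrow> ('x \<Rightarrow> bool) set \<Rightarrow> real \<Rightarrow> real \<Rightarrow> ('x \<Rightarrow> bool) set \<Rightarrow> bool" where
  "tight X H \<alpha> \<epsilon> T \<longleftrightarrow>
     (\<exists>h \<in> H. real (card (T \<inter> ball_hyp X H h \<epsilon>)) \<ge> \<alpha> * real (card T))"

definition separable :: "'x set \<Rightarrow> ('x \<Rightarrow> bool) set \<Rightarrow> real \<Rightarrow> real \<Rightarrow> bool" where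
  "separable X H \<alpha> \<epsilon> \<longleftrightarrow>
     (\<forall>T \<subseteq> H. \<not> tight X H \<alpha> \<epsilon> T \<longrightarrow>
        (\<exists>S T0 T1. S \<subseteq> X \<and> T0 \<subseteq> T \<and> T1 \<subseteq> T \<and> T0 \<inter> T1 = {} \<and>
           real (card S) \<ge> \<alpha> * real (card X) \<and>
           real (card T0) \<ge> \<alpha> * real (card T) \<and>
           real (card T1) \<ge> \<alpha> * real (card T) \<and>
           \<bar>density S T0 - density S T1\<bar> \<ge> \<alpha>))"

definition X_TH :: "nat \<Rightarrow> real set" where
  "X_TH n = {real k / real n | k. k \<in> {1..n}}"

definition h_thr :: "real \<Rightarrow> real \<Rightarrow> bool" where
  "h_thr b x \<longleftrightarrow> x \<le> b"

definition H_TH :: "nat \<Rightarrow> (real \<Rightarrow> bool) set" where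
  "H_TH n = {h_thr (real (2 * k + 1) / (2 * real n)) | k. k \<le> n}"

end

theory Submission
  imports Defs
begin

definition gk :: "nat \<Rightarrow> nat \<Rightarrow> real \<Rightarrow> bool" where
  "gk n k = h_thr (real (2 * k + 1) / (2 * real n))"

definition xv :: "nat \<Rightarrow> nat \<Rightarrow> real" where
  "xv n j = real j / real n"

lemma g_x: assumes "n > 0" shows "gk n k (xv n j) \<longleftrightarrow> j \<le> k"
proof -
  have "gk n k (xv n j) \<longleftrightarrow> real j / real n \<le> real (2 * k + 1) / (2 * real n)"
    by (simp add: gk_def xv_def h_thr_def)
  also have "\<dots> \<longleftrightarrow> 2 * real j \<le> real (2 * k + 1)"
    using assms by (simp add: field_simps)
  also have "\<dots> \<longleftrightarrow> j \<le> k" by linarith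
  finally show ?thesis .
qed

lemma inj_g: assumes "n > 0" shows "inj (gk n)"
proof (rule injI)
  fix k l assume "gk n k = gk n l"
  hence "\<And>j. j \<le> k \<longleftrightarrow> j \<le> l" using g_x[OF assms] by metis
  then show "k = l" by (meson le_antisym order_refl)
qed

lemma inj_xv: assumes "n > 0" shows "inj (xv n)"
  using assms by (auto intro!: injI simp: xv_def)

lemma X_eq: "X_TH n = xv n ` {1..n}"
  by (auto simp: X_TH_def xv_def)

lemma H_eq: "H_TH n = gk n ` {..n}"
  by (auto simp: H_TH_def gk_def)

lemma card_X: assumes "n > 0" shows "card (X_TH n) = n"
  using inj_xv[OF assms] by (simp add: X_eq card_image inj_on_subset)

theorem mainTheorem3:
  fixes n :: nat and \<alpha> :: real
  assumes "n > 0" and "0 < \<alpha>" and "\<alpha> < 1/3"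
  shows "separable (X_TH n) (H_TH n) \<alpha> \<alpha>"
  unfolding separable_def
proof (intro allI impI)
  fix T assume TH: "T \<subseteq> H_TH n" and nt: "\<not> tight (X_TH n) (H_TH n) \<alpha> \<alpha> T"
  have injg: "inj (gk n)" using inj_g[OF assms(1)] .
  define K where "K = {k. k \<le> n \<and> gk n k \<in> T}"
  have TK: "T = gk n ` K" using TH unfolding K_def H_eq by auto
  have finK: "finite K" unfolding K_def by auto
  have finT: "finite T" using TK finK by simp
  have cardT: "card T = card K" using TK injg by (simp add: card_image inj_on_subset)
  define m where "m = card K"
  have nt': "real (card (T \<inter> ball_hyp (X_TH n) (H_TH n) (gk n k) \<alpha>)) < \<alpha> * real m"
    if "k \<le> n" for k
  proof -
    have "gk n k \<in> H_TH n" using that H_eq by auto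
    thus ?thesis using nt cardT unfolding tight_def m_def by force
  qed
  have mpos: "\<alpha> * real m > 0" using nt'[of 0] by linarith
  define P where "P t \<longleftrightarrow> \<alpha> * real m \<le> real (card (K \<inter> {..t}))" for t
  define a where "a = Least P"
  have "K \<inter> {..n} = K" unfolding K_def by auto
  hence Pn: "P n" unfolding P_def m_def using assms(2,3) mult_left_le_one_le[of "real (card K)" \<alpha>] by simp
  have Pa: "P a" unfolding a_def using Pn by (rule LeastI)
  have an: "a \<le> n" unfolding a_def using Pn by (rule Least_le)
  have La: "real (card (K \<inter> {..<a})) < \<alpha> * real m"
  proof (cases "a = 0")
    case True then show ?thesis using mpos by simp
  next
    case False
    hence "\<not> P (a - 1)" unfolding a_def using not_less_Least[of "a - 1" P] a_def by simp
    moreover have "{..<a} = {..a - 1}" using False by auto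
    ultimately show ?thesis unfolding P_def by simp
  qed
  define Q where "Q t \<longleftrightarrow> \<alpha> * real m \<le> real (card (K \<inter> {t..}))" for t
  have Qb: "\<forall>t. Q t \<longrightarrow> t \<le> n"
  proof (intro allI impI, rule ccontr)
    fix t assume "Q t" "\<not> t \<le> n"
    hence "K \<inter> {t..} = {}" unfolding K_def by auto
    thus False using \<open>Q t\<close> mpos unfolding Q_def by simp
  qed
  have "K \<inter> {0..} = K" by auto
  hence Q0: "Q 0" unfolding Q_def m_def using assms(2,3) mult_left_le_one_le[of "real (card K)" \<alpha>] by simp
  define b where "b = Greatest Q"
  have Qbb: "Q b" unfolding b_def using Q0 Qb by (metis GreatestI_nat)
  have bn: "b \<le> n" using Qbb Qb by blast
  have Ub: "real (card (K \<inter> {b<..})) < \<alpha> * real m"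
  proof -
    have "\<not> Q (Suc b)"
    proof
      assume "Q (Suc b)"
      hence "Suc b \<le> b" unfolding b_def using Qb by (metis Greatest_le_nat)
      thus False by simp
    qed
    moreover have "{b<..} = {Suc b..}" by auto
    ultimately show ?thesis unfolding Q_def by simp
  qed
  have gap: "real b - real a > \<alpha> * real n"
  proof (rule ccontr)
    assume "\<not> ?thesis"
    hence ba: "real b - real a \<le> \<alpha> * real n" by simp
    have sub: "gk n ` (K \<inter> {a..b}) \<subseteq> T \<inter> ball_hyp (X_TH n) (H_TH n) (gk n a) \<alpha>"
    proof
      fix h assume "h \<in> gk n ` (K \<inter> {a..b})"
      then obtain k where k: "k \<in> K" "a \<le> k" "k \<le> b" and h: "h = gk n k" by auto
      have hT: "h \<in> T" using k h TK by auto
      have hH: "h \<in> H_TH n" using hT TH by auto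
      have "{x \<in> X_TH n. gk n a x \<noteq> h x} \<subseteq> xv n ` {a<..k}"
      proof
        fix x assume "x \<in> {x \<in> X_TH n. gk n a x \<noteq> h x}"
        then obtain j where "x = xv n j" "gk n a (xv n j) \<noteq> gk n k (xv n j)"
          unfolding X_eq h by auto
        thus "x \<in> xv n ` {a<..k}" using g_x[OF assms(1)] k(2) by auto
      qed
      hence "card {x \<in> X_TH n. gk n a x \<noteq> h x} \<le> card (xv n ` {a<..k})"
        by (intro card_mono) auto
      also have "\<dots> \<le> k - a" using card_image_le[of "{a<..k}" "xv n"] by simp
      finally have "real (card {x \<in> X_TH n. gk n a x \<noteq> h x}) \<le> real b - real a"
        using k by linarith
      also have "\<dots> \<le> \<alpha> * real (card (X_TH n))" using ba card_X[OF assms(1)] by simp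
      finally show "h \<in> T \<inter> ball_hyp (X_TH n) (H_TH n) (gk n a) \<alpha>"
        using hT hH unfolding ball_hyp_def eps_close_def by simp
    qed
    have "card (K \<inter> {a..b}) = card (gk n ` (K \<inter> {a..b}))"
      using injg by (simp add: card_image inj_on_subset)
    also have "\<dots> \<le> card (T \<inter> ball_hyp (X_TH n) (H_TH n) (gk n a) \<alpha>)"
      using sub finT by (intro card_mono) auto
    finally have Mid: "real (card (K \<inter> {a..b})) < \<alpha> * real m" using nt'[OF an] by linarith
    have "K \<subseteq> (K \<inter> {..<a}) \<union> (K \<inter> {a..b}) \<union> (K \<inter> {b<..})" by auto
    hence "m \<le> card ((K \<inter> {..<a}) \<union> (K \<inter> {a..b}) \<union> (K \<inter> {b<..}))"
      unfolding m_def by (intro card_mono) (use finK in auto)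
    also have "\<dots> \<le> card (K \<inter> {..<a}) + card (K \<inter> {a..b}) + card (K \<inter> {b<..})"
      by (meson add_le_mono card_Un_le le_refl order_trans)
    finally have "real m \<le> real (card (K \<inter> {..<a})) + real (card (K \<inter> {a..b})) + real (card (K \<inter> {b<..}))"
      by linarith
    hence "real m < 3 * (\<alpha> * real m)" using La Mid Ub by linarith
    moreover have "3 * (\<alpha> * real m) \<le> real m"
      using assms(2,3) mult_right_mono[of "3*\<alpha>" 1 "real m"] by simp
    ultimately show False by simp
  qed
  have ab: "a < b" using gap assms(2) by (smt (verit) of_nat_0_le_iff of_nat_less_iff zero_le_mult_iff)
  define S where "S = xv n ` {a<..b}"
  define T0 where "T0 = gk n ` (K \<inter> {..a})"
  define T1 where "T1 = gk n ` (K \<inter> {b..})"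
  have cS: "card S = b - a" unfolding S_def using inj_xv[OF assms(1)]
    by (simp add: card_image inj_on_subset)
  have c0: "card T0 = card (K \<inter> {..a})" unfolding T0_def using injg
    by (simp add: card_image inj_on_subset)
  have c1: "card T1 = card (K \<inter> {b..})" unfolding T1_def using injg
    by (simp add: card_image inj_on_subset)
  have e0: "{(x, h). x \<in> S \<and> h \<in> T0 \<and> h x} = {}"
    unfolding S_def T0_def using g_x[OF assms(1)] by auto
  have e1: "{(x, h). x \<in> S \<and> h \<in> T1 \<and> h x} = S \<times> T1"
    unfolding S_def T1_def using g_x[OF assms(1)] by auto
  have finS: "finite S" "finite T1" unfolding S_def T1_def using finK by auto
  have d0: "density S T0 = 0" unfolding density_def edges_def e0 by simp
  have Spos: "card S > 0" using cS ab by simp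
  have T1pos: "card T1 > 0" using c1 Qbb mpos unfolding Q_def by linarith
  have d1: "density S T1 = 1" unfolding density_def edges_def e1
    using Spos T1pos by (simp add: card_cartesian_product)
  show "\<exists>S T0 T1. S \<subseteq> X_TH n \<and> T0 \<subseteq> T \<and> T1 \<subseteq> T \<and> T0 \<inter> T1 = {} \<and>
           real (card S) \<ge> \<alpha> * real (card (X_TH n)) \<and>
           real (card T0) \<ge> \<alpha> * real (card T) \<and>
           real (card T1) \<ge> \<alpha> * real (card T) \<and>
           \<bar>density S T0 - density S T1\<bar> \<ge> \<alpha>"
  proof (intro exI conjI)
    show "S \<subseteq> X_TH n" unfolding S_def X_eq using bn by auto
    show "T0 \<subseteq> T" unfolding T0_def TK by auto
    show "T1 \<subseteq> T" unfolding T1_def TK by auto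
    show "T0 \<inter> T1 = {}" unfolding T0_def T1_def using ab injg by (auto dest: injD)
    show "real (card S) \<ge> \<alpha> * real (card (X_TH n))"
      using cS gap ab card_X[OF assms(1)] by (simp add: of_nat_diff)
    show "real (card T0) \<ge> \<alpha> * real (card T)" using c0 Pa cardT unfolding P_def m_def by simp
    show "real (card T1) \<ge> \<alpha> * real (card T)" using c1 Qbb cardT unfolding Q_def m_def by simp
    show "\<bar>density S T0 - density S T1\<bar> \<ge> \<alpha>" using d0 d1 assms by simp
  qed
qed

end
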